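(* Let $\mathcal{S}_m\subset\mathcal{S}_n\subset\mathcal{T}$ be nested subsets of the training set with $m<n$ elements respectively, and let $L_m,L_n$ be their empirical losses. Then for every $\mathbf{w}\in\mathbb{R}^p$, $$\mathbb{E}\left[|L_n(\mathbf{w})-L_m(\mathbf{w})|\right]\le\frac{n-m}{n}\left(V_{n-m}+V_m\right).$$
   Context: Let $Z$ be a random variable with distribution $P$ on a space $\mathcal{Z}$ and $f:\mathbb{R}^p\times\mathcal{Z}\to\mathbb{R}$ a loss function, with expected loss $L(\mathbf{w})=\mathbb{E}_Z[f(\mathbf{w},Z)]$. The training set $\mathcal{T}=\{z_1,\dots,z_N\}$ consists of $N$ independent samples from $P$. For a (fixed, data-independent) subset $\mathcal{S}\subseteq\mathcal{T}$ with $k$ elements, $L_{\mathcal{S}}(\mathbf{w})=\frac1k\sum_{z\in\mathcal{S}}f(\mathbf{w},z)$; for the sets $\mathcal{S}_k$ we write $L_k=L_{\mathcal{S}_k}$. Standing assumption: there are constants $V_k$ such that for every $k$ and every set $\mathcal{S}$ of $k$ independent samples from $P$, $\mathbb{E}[\sup_{\mathbf{w}\in\mathbb{R}^p}|L(\mathbf{w})-L_{\mathcal{S}}(\mathbf{w})|]\le V_k$ (expectation over the samples). *)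

theory Defs
  imports "HOL-Probability.Probability"
begin

definition exp_loss :: "('w \<Rightarrow> 'z \<Rightarrow> real) \<Rightarrow> 'z measure \<Rightarrow> 'w \<Rightarrow> real" where
  "exp_loss f P w = (\<integral>z. f w z \<partial>P)"

text \<open>Empirical loss on the subset S = {z_i | i in I} of the training set, as a function
  of the sample outcome x: L_S(w) = (1/|I|) * sum_{i in I} f(w, z_i).\<close>
definition emp_loss :: "('w \<Rightarrow> 'z \<Rightarrow> real) \<Rightarrow> (nat \<Rightarrow> 'a \<Rightarrow> 'z) \<Rightarrow> nat set \<Rightarrow> 'w \<Rightarrow> 'a \<Rightarrow> real" where
  "emp_loss f Z I w x = (1 / real (card I)) * (\<Sum>i\<in>I. f w (Z i x))"

end

theory Submission
  imports Defs
begin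

lemma comb_equal:
  fixes g :: "nat \<Rightarrow> real"
  assumes fin: "finite S" and k1: "1 \<le> k" and kS: "k < card S"
    and all: "\<And>I. I \<subseteq> S \<Longrightarrow> card I = k \<Longrightarrow> sum g I = real k * c"
  shows "\<forall>i\<in>S. g i = c"
proof -
  have eq: "g i = g j" if ij: "i \<in> S" "j \<in> S" "i \<noteq> j" for i j
  proof -
    have "card (S - {i,j}) = card S - 2" using ij fin by (simp add: card_Diff_subset)
    hence "k - 1 \<le> card (S - {i,j})" using kS by linarith
    then obtain T where T: "T \<subseteq> S - {i,j}" "card T = k - 1"
      using obtain_subset_with_card_n by metis
    have fT: "finite T" using T fin finite_subset by blast
    have ni: "i \<notin> T" "j \<notin> T" using T by auto
    have "sum g (insert i T) = real k * c" using ni T ij fT k1 by (intro all) auto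
    moreover have "sum g (insert j T) = real k * c" using ni T ij fT k1 by (intro all) auto
    ultimately show ?thesis using T fT ni by auto
  qed
  show ?thesis
  proof
    fix i assume i: "i \<in> S"
    have "card (S - {i}) = card S - 1" using i fin by simp
    hence "k - 1 \<le> card (S - {i})" using kS by linarith
    then obtain T where T: "T \<subseteq> S - {i}" "card T = k - 1"
      using obtain_subset_with_card_n by metis
    have fT: "finite T" using T fin finite_subset by blast
    have "i \<notin> T" using T by auto
    hence I: "insert i T \<subseteq> S" "card (insert i T) = k" using T i fT k1 by auto
    have "sum g (insert i T) = sum (\<lambda>_. g i) (insert i T)"
      using I(1) eq by (intro sum.cong) auto
    also have "\<dots> = real k * g i" using I(2) by simp
    finally show "g i = c" using all[OF I] k1 by simp
  qed
qed

lemma ae_equal: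
  fixes M :: "'a measure" and P :: "'z measure"
    and f :: "'w \<Rightarrow> 'z \<Rightarrow> real"
    and Z :: "nat \<Rightarrow> 'a \<Rightarrow> 'z" and V :: "nat \<Rightarrow> real"
  assumes standing: "\<And>k I. I \<subseteq> {..<N} \<Longrightarrow> card I = k \<Longrightarrow> 1 \<le> k \<Longrightarrow>
        (\<lambda>x. SUP v. ennreal \<bar>exp_loss f P v - emp_loss f Z I v x\<bar>) \<in> borel_measurable M
        \<and> (\<integral>\<^sup>+ x. (SUP v. ennreal \<bar>exp_loss f P v - emp_loss f Z I v x\<bar>) \<partial>M) \<le> ennreal (V k)"
    and SN: "S \<subseteq> {..<N}" and k1: "1 \<le> k" and kS: "k < card S" and neg: "V k < 0"
  shows "AE x in M. \<forall>i\<in>S. f w (Z i x) = exp_loss f P w"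
proof -
  have fin: "finite S" using SN finite_subset by blast
  have one: "AE x in M. emp_loss f Z I w x = exp_loss f P w"
    if I: "I \<in> {I. I \<subseteq> S \<and> card I = k}" for I
  proof -
    let ?F = "\<lambda>x. SUP v. ennreal \<bar>exp_loss f P v - emp_loss f Z I v x\<bar>"
    have IN: "I \<subseteq> {..<N}" "card I = k" using I SN by auto
    from standing[OF IN k1] neg have m: "?F \<in> borel_measurable M" and le: "integral\<^sup>N M ?F \<le> 0"
      by (auto simp: ennreal_neg)
    hence "integral\<^sup>N M ?F = 0" by simp
    hence "AE x in M. ?F x = 0" using nn_integral_0_iff_AE[OF m] by simp
    thus ?thesis
    proof (rule AE_mp, intro AE_I2 impI)
      fix x assume "?F x = 0"
      moreover have "ennreal \<bar>exp_loss f P w - emp_loss f Z I w x\<bar> \<le> ?F x"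
        by (rule SUP_upper) simp
      ultimately show "emp_loss f Z I w x = exp_loss f P w" by simp
    qed
  qed
  have "AE x in M. \<forall>I\<in>{I. I \<subseteq> S \<and> card I = k}. emp_loss f Z I w x = exp_loss f P w"
    using fin by (intro AE_ball_countable' one countable_finite) auto
  thus ?thesis
  proof (rule AE_mp, intro AE_I2 impI)
    fix x assume h: "\<forall>I\<in>{I. I \<subseteq> S \<and> card I = k}. emp_loss f Z I w x = exp_loss f P w"
    show "\<forall>i\<in>S. f w (Z i x) = exp_loss f P w"
    proof (rule comb_equal[OF fin k1 kS])
      fix I assume "I \<subseteq> S" "card I = k"
      with h have "emp_loss f Z I w x = exp_loss f P w" by auto
      thus "(\<Sum>i\<in>I. f w (Z i x)) = real k * exp_loss f P w"
        using k1 `card I = k` by (auto simp: emp_loss_def field_simps)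
    qed
  qed
qed

theorem lemma5:
  fixes M :: "'a measure" and P :: "'z measure"
    and f :: "real ^ 'p \<Rightarrow> 'z \<Rightarrow> real"
    and Z :: "nat \<Rightarrow> 'a \<Rightarrow> 'z" and N :: nat and V :: "nat \<Rightarrow> real"
    and Sm Sn :: "nat set" and m n :: nat and w :: "real ^ 'p"
  assumes "prob_space M"
    and "\<And>i. i < N \<Longrightarrow> Z i \<in> measurable M P"
    and "\<And>i. i < N \<Longrightarrow> distr M P (Z i) = P"
    and "prob_space.indep_vars M (\<lambda>_. P) Z {..<N}"
    and standing: "\<And>k I. I \<subseteq> {..<N} \<Longrightarrow> card I = k \<Longrightarrow> 1 \<le> k \<Longrightarrow>
        (\<lambda>x. SUP v. ennreal \<bar>exp_loss f P v - emp_loss f Z I v x\<bar>) \<in> borel_measurable M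
        \<and> (\<integral>\<^sup>+ x. (SUP v. ennreal \<bar>exp_loss f P v - emp_loss f Z I v x\<bar>) \<partial>M) \<le> ennreal (V k)"
    and "Sm \<subset> Sn" and "Sn \<subseteq> {..<N}"
    and "card Sm = m" and "card Sn = n" and "0 < m" and "m < n"
  shows "(\<integral>\<^sup>+ x. ennreal \<bar>emp_loss f Z Sn w x - emp_loss f Z Sm w x\<bar> \<partial>M)
           \<le> ennreal ((real n - real m) / real n * (V (n - m) + V m))"
proof -
  define D where "D = Sn - Sm"
  define L where "L = exp_loss f P w"
  have finn: "finite Sn" using assms(7) finite_subset by blast
  have finm: "finite Sm" using assms(6) finn finite_subset by blast
  have cD: "card D = n - m" using assms(6,8,9) finn unfolding D_def
    by (simp add: card_Diff_subset finm less_imp_le)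
  have DN: "D \<subseteq> {..<N}" "Sm \<subseteq> {..<N}" using assms(6,7) unfolding D_def by auto
  have D1: "1 \<le> n - m" using assms(11) by simp
  show ?thesis
  proof (cases "V (n - m) < 0 \<or> V m < 0")
    case True
    have "AE x in M. \<forall>i\<in>Sn. f w (Z i x) = L"
      using True
    proof
      assume "V (n - m) < 0"
      thus ?thesis unfolding L_def
        using ae_equal[OF standing assms(7) D1, where w=w] assms(9,10,11) by auto
    next
      assume "V m < 0"
      thus ?thesis unfolding L_def
        using ae_equal[OF standing assms(7), where k=m and w=w] assms(9,10,11) by auto
    qed
    hence "AE x in M. ennreal \<bar>emp_loss f Z Sn w x - emp_loss f Z Sm w x\<bar> = 0"
    proof (rule AE_mp, intro AE_I2 impI)
      fix x assume h: "\<forall>i\<in>Sn. f w (Z i x) = L"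
      have "emp_loss f Z Sn w x = L" unfolding emp_loss_def
        using h assms(9,10,11) by simp
      moreover have "emp_loss f Z Sm w x = L" unfolding emp_loss_def
        using h assms(6,8,10) by (simp add: subset_eq psubset_eq)
      ultimately show "ennreal \<bar>emp_loss f Z Sn w x - emp_loss f Z Sm w x\<bar> = 0" by simp
    qed
    hence "(\<integral>\<^sup>+ x. ennreal \<bar>emp_loss f Z Sn w x - emp_loss f Z Sm w x\<bar> \<partial>M) = (\<integral>\<^sup>+ x. 0 \<partial>M)"
      by (rule nn_integral_cong_AE)
    thus ?thesis by simp
  next
    case False
    define c where "c = (real n - real m) / real n"
    have c0: "0 \<le> c" unfolding c_def using assms(11) by simp
    define A where "A = (\<lambda>x. SUP v. ennreal \<bar>exp_loss f P v - emp_loss f Z D v x\<bar>)"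
    define B where "B = (\<lambda>x. SUP v. ennreal \<bar>exp_loss f P v - emp_loss f Z Sm v x\<bar>)"
    have SA: "A \<in> borel_measurable M" "integral\<^sup>N M A \<le> ennreal (V (n - m))"
      using standing[OF DN(1) cD D1] unfolding A_def by auto
    have SB: "B \<in> borel_measurable M" "integral\<^sup>N M B \<le> ennreal (V m)"
      using standing[OF DN(2) assms(8)] assms(10) unfolding B_def by auto
    have pw: "ennreal \<bar>emp_loss f Z Sn w x - emp_loss f Z Sm w x\<bar> \<le> ennreal c * (A x + B x)" for x
    proof -
      let ?a = "emp_loss f Z D w x" and ?b = "emp_loss f Z Sm w x"
      have split: "(\<Sum>i\<in>Sn. f w (Z i x)) = (\<Sum>i\<in>Sm. f w (Z i x)) + (\<Sum>i\<in>D. f w (Z i x))"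
        unfolding D_def using finn assms(6) by (metis add.commute psubset_imp_subset sum.subset_diff)
      have n0: "real n > 0" "real m > 0" "real (n - m) = real n - real m" "real n - real m > 0"
        using assms(10,11) by auto
      define sb where "sb = (\<Sum>i\<in>Sm. f w (Z i x))"
      define sd where "sd = (\<Sum>i\<in>D. f w (Z i x))"
      have e1: "(real m / real n) * (sb / real m) = sb / real n" using n0 by simp
      have e2: "((real n - real m) / real n) * (sd / (real n - real m)) = sd / real n" using n0 by simp
      have "emp_loss f Z Sn w x = (sb + sd) / real n"
        unfolding emp_loss_def split sb_def sd_def using assms(9) by simp
      also have "\<dots> = (real m / real n) * (sb / real m) + ((real n - real m) / real n) * (sd / (real n - real m))"
        unfolding e1 e2 by (simp add: add_divide_distrib)
      also have "\<dots> = (real m / real n) * ?b + ((real n - real m) / real n) * ?a"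
        unfolding emp_loss_def sb_def sd_def using assms(8) cD n0(3) by simp
      finally have "emp_loss f Z Sn w x = (real m / real n) * ?b + ((real n - real m) / real n) * ?a" .
      moreover have "real m / real n = 1 - c" unfolding c_def using n0 by (simp add: diff_divide_distrib)
      ultimately have "emp_loss f Z Sn w x - ?b = c * (?a - ?b)" unfolding c_def
        by (simp add: algebra_simps)
      hence "\<bar>emp_loss f Z Sn w x - ?b\<bar> = c * \<bar>?a - ?b\<bar>" using c0 by (simp add: abs_mult)
      also have "\<dots> \<le> c * (\<bar>L - ?a\<bar> + \<bar>L - ?b\<bar>)" using c0 by (intro mult_left_mono) auto
      finally have r: "\<bar>emp_loss f Z Sn w x - ?b\<bar> \<le> c * (\<bar>L - ?a\<bar> + \<bar>L - ?b\<bar>)" .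
      have "ennreal \<bar>L - ?a\<bar> \<le> A x" unfolding A_def L_def by (rule SUP_upper) simp
      moreover have "ennreal \<bar>L - ?b\<bar> \<le> B x" unfolding B_def L_def by (rule SUP_upper) simp
      ultimately have "ennreal (\<bar>L - ?a\<bar> + \<bar>L - ?b\<bar>) \<le> A x + B x"
        by (subst ennreal_plus) (auto intro: add_mono)
      hence "ennreal c * ennreal (\<bar>L - ?a\<bar> + \<bar>L - ?b\<bar>) \<le> ennreal c * (A x + B x)"
        by (rule mult_left_mono) simp
      moreover have "ennreal (\<bar>emp_loss f Z Sn w x - ?b\<bar>) \<le> ennreal c * ennreal (\<bar>L - ?a\<bar> + \<bar>L - ?b\<bar>)"
        using r c0 by (subst ennreal_mult[symmetric]) (auto intro: ennreal_leI)
      ultimately show ?thesis by (rule order_trans[rotated])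
    qed
    have "(\<integral>\<^sup>+ x. ennreal \<bar>emp_loss f Z Sn w x - emp_loss f Z Sm w x\<bar> \<partial>M)
        \<le> (\<integral>\<^sup>+ x. ennreal c * (A x + B x) \<partial>M)" by (rule nn_integral_mono) (rule pw)
    also have "\<dots> = ennreal c * (integral\<^sup>N M A + integral\<^sup>N M B)"
      using SA(1) SB(1) by (simp add: nn_integral_cmult nn_integral_add)
    also have "\<dots> \<le> ennreal c * (ennreal (V (n - m)) + ennreal (V m))"
      using SA(2) SB(2) by (intro mult_left_mono add_mono) auto
    also have "\<dots> = ennreal (c * (V (n - m) + V m))"
      using False c0 by (simp add: ennreal_mult ennreal_plus)
    finally show ?thesis unfolding c_def .
  qed
qed

end
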